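(* For every integer $k \geq 2$ there exists a set $T \subset \mathbb{R}^2$ such that: (1) for any $2k+3$ points of $T$ there is a point $x \in T$ that sees each of them through $T$; and (2) there exist $2k+4$ points of $T$ that are not all seen through $T$ from any single point of $T$.
   Context: For a set $S \subset \mathbb{R}^2$ and points $x,y \in S$, "$x$ sees $y$ through $S$" means that the closed segment $[x,y]$ is contained in $S$. *)

theory Defs
  imports "HOL-Analysis.Analysis"
begin

definition sees_through :: "(real^2) set \<Rightarrow> real^2 \<Rightarrow> real^2 \<Rightarrow> bool" where
  "sees_through S x y \<longleftrightarrow> x \<in> S \<and> y \<in> S \<and> closed_segment x y \<subseteq> S"

end

theory Submission
  imports Defs
begin

(* Construction: T = the plane minus the points (t,0) with t not in a set SS k of reals.
   SS k is built by a transfinite recursion (well-order of length continuum) so that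
   (i) SS k contains no (k+1)-term arithmetic progression with difference in (0,1),
   (ii) for every k points below the axis there is a point above the axis all of whose
   segments to them cross the axis inside SS k, and 0, 2 are in SS k but 1 is not. *)

unbundle cardinal_syntax

definition small :: "'a set \<Rightarrow> bool" where
  "small A \<longleftrightarrow> |A| <o |UNIV :: real set|"

lemma small_finite: "finite A \<Longrightarrow> small A"
  unfolding small_def
  by (rule finite_ordLess_infinite) (auto simp: card_of_Well_order card_of_well_order_on Field_card_of infinite_UNIV_char_0)

lemma small_subset: "small B \<Longrightarrow> A \<subseteq> B \<Longrightarrow> small A"
  unfolding small_def using card_of_mono1 ordLeq_ordLess_trans by blast

lemma small_image: "small A \<Longrightarrow> small (f ` A)"
  unfolding small_def using card_of_image ordLeq_ordLess_trans by blast

lemma small_Un: "small A \<Longrightarrow> small B \<Longrightarrow> small (A \<union> B)"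
  unfolding small_def using card_of_Un_ordLess_infinite infinite_UNIV_char_0 by blast

lemma not_small_UNIV: "\<not> small (UNIV :: real set)"
  unfolding small_def using ordLess_irreflexive by blast

lemma small_Times_aux:
  assumes "small B" "|A| \<le>o |B|" "\<not> finite B"
  shows "small (A \<times> B)"
proof -
  have "|A \<times> B| \<le>o |B \<times> B|" using assms(2) card_of_Times_mono1 by blast
  moreover have "|B \<times> B| =o |B|" using assms(3) card_of_Times_same_infinite by blast
  ultimately have "|A \<times> B| \<le>o |B|" using ordLeq_ordIso_trans by blast
  thus ?thesis using assms(1) unfolding small_def using ordLeq_ordLess_trans by blast
qed

lemma small_Times:
  assumes A: "small A" and B: "small B"
  shows "small (A \<times> B)"
proof (cases "finite A \<and> finite B")
  case True
  then show ?thesis by (intro small_finite) auto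
next
  case False
  have "|A| \<le>o |B| \<or> |B| \<le>o |A|" by (rule ordLeq_total[OF card_of_Well_order card_of_Well_order])
  then show ?thesis
  proof
    assume le: "|A| \<le>o |B|"
    have "\<not> finite B" using False le card_of_ordLeq_finite by blast
    then show ?thesis using small_Times_aux[OF B le] by blast
  next
    assume le: "|B| \<le>o |A|"
    have inf: "\<not> finite A" using False le card_of_ordLeq_finite by blast
    have "small (B \<times> A)" using small_Times_aux[OF A le inf] .
    moreover have "A \<times> B = (\<lambda>(x,y). (y,x)) ` (B \<times> A)" by auto
    ultimately show ?thesis using small_image by metis
  qed
qed

lemma small_UNION:
  assumes I: "small I" and F: "\<And>i. i \<in> I \<Longrightarrow> finite (F i)"
  shows "small (\<Union>i\<in>I. F i)"
proof (cases "finite I")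
  case True
  then show ?thesis using F by (intro small_finite) auto
next
  case False
  have "\<forall>i\<in>I. |F i| \<le>o |I|"
  proof
    fix i assume "i \<in> I"
    then have "|F i| <o |I|" using F False
      by (intro finite_ordLess_infinite) (auto simp: card_of_Well_order card_of_well_order_on Field_card_of)
    then show "|F i| \<le>o |I|" by (rule ordLess_imp_ordLeq)
  qed
  moreover have "|I| \<le>o |I|" by (simp add: ordLeq_refl card_of_Card_order)
  ultimately have "|\<Union>i\<in>I. F i| \<le>o |I|" using card_of_UNION_ordLeq_infinite False by blast
  then show ?thesis using I unfolding small_def using ordLeq_ordLess_trans by blast
qed


definition cr :: "real^2 \<Rightarrow> real^2 \<Rightarrow> real" where
  "cr p q = (p$1 * (- q$2) + q$1 * p$2) / (p$2 - q$2)"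

definition apfree :: "nat \<Rightarrow> real set \<Rightarrow> bool" where
  "apfree k S \<longleftrightarrow> (\<forall>m l. 0 < l \<longrightarrow> l < 1 \<longrightarrow> \<not> (\<forall>i\<le>k. m + real i * l \<in> S))"

lemma ext_step:
  fixes k :: nat and S0 :: "real set" and L :: "(real^2) set"
  assumes k: "2 \<le> k" and sm: "small S0" and ap: "apfree k S0" and one: "1 \<notin> S0"
    and finL: "finite L" and cardL: "card L \<le> k" and low: "\<forall>d\<in>L. d$2 < 0"
  shows "\<exists>x::real^2. x$2 > 0 \<and> apfree k (S0 \<union> (\<lambda>d. cr x d) ` L) \<and> 1 \<notin> (\<lambda>d. cr x d) ` L"
proof -
  define hh where "hh d = - (d$2)" for d :: "real^2"
  have hpos: "hh d > 0" if "d \<in> L" for d using low that by (simp add: hh_def)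
  define rho where "rho i0 p1 p2 = (real i0 - real p1) / (real p1 - real p2)" for i0 p1 p2 :: nat
  define Et where "Et = (\<lambda>(d1,d2,i0,p1,p2). - hh d1 * hh d2 / ((1 + rho i0 p1 p2) * hh d1 - rho i0 p1 p2 * hh d2))
      ` (L \<times> L \<times> {..k} \<times> {..k} \<times> {..k})"
  have finEt: "finite Et" unfolding Et_def using finL by auto
  define t where "t = Max (insert 0 Et) + 1"
  have "0 \<le> Max (insert 0 Et)" using finEt by (intro Max_ge) auto
  then have t0: "t > 0" unfolding t_def by simp
  have tE: "t \<notin> Et"
  proof
    assume "t \<in> Et"
    then have "t \<le> Max (insert 0 Et)" using finEt by simp
    then show False unfolding t_def by simp
  qed
  define A where "A d = d$1 * t / (t + hh d)" for d :: "real^2"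
  define B where "B d = hh d / (t + hh d)" for d :: "real^2"
  have Bpos: "B d > 0" if "d \<in> L" for d using hpos[OF that] t0 by (simp add: B_def)
  have crx: "cr (vector [x1, t]) d = A d + B d * x1" if "d \<in> L" for x1 d
  proof -
    have "t + hh d > 0" using hpos[OF that] t0 by simp
    then show ?thesis unfolding cr_def A_def B_def hh_def
      by (simp add: add_divide_distrib diff_divide_distrib mult.commute)
  qed
  have slope: "B d1 + rho i0 p1 p2 * (B d1 - B d2) \<noteq> 0"
    if "d1 \<in> L" "d2 \<in> L" "i0 \<le> k" "p1 \<le> k" "p2 \<le> k" "p1 \<noteq> p2" for d1 d2 i0 p1 p2
  proof
    assume eq: "B d1 + rho i0 p1 p2 * (B d1 - B d2) = 0"
    let ?r = "rho i0 p1 p2"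
    have h1: "hh d1 > 0" and h2: "hh d2 > 0" using hpos that by auto
    have q1: "t + hh d1 > 0" and q2: "t + hh d2 > 0" using h1 h2 t0 by auto
    have q1': "t + hh d1 \<noteq> 0" and q2': "t + hh d2 \<noteq> 0" using q1 q2 by auto
    have b1: "B d1 * (t + hh d1) = hh d1" unfolding B_def using q1' by simp
    have b2: "B d2 * (t + hh d2) = hh d2" unfolding B_def using q2' by simp
    have "(B d1 + ?r * (B d1 - B d2)) * ((t + hh d1) * (t + hh d2)) = (1 + ?r) * (B d1 * (t + hh d1)) * (t + hh d2) - ?r * (B d2 * (t + hh d2)) * (t + hh d1)"
      by (simp add: algebra_simps)
    also have "\<dots> = (1 + ?r) * hh d1 * (t + hh d2) - ?r * hh d2 * (t + hh d1)" using b1 b2 by simp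
    finally have "(B d1 + ?r * (B d1 - B d2)) * ((t + hh d1) * (t + hh d2)) = (1 + ?r) * hh d1 * (t + hh d2) - ?r * hh d2 * (t + hh d1)" .
    then have "(1 + ?r) * hh d1 * (t + hh d2) - ?r * hh d2 * (t + hh d1) = 0" using eq by simp
    then have e2: "t * ((1 + ?r) * hh d1 - ?r * hh d2) = - (hh d1 * hh d2)"
      by (simp add: algebra_simps)
    have D: "(1 + ?r) * hh d1 - ?r * hh d2 \<noteq> 0"
    proof
      assume "(1 + ?r) * hh d1 - ?r * hh d2 = 0"
      with e2 have "hh d1 * hh d2 = 0" by simp
      with h1 h2 show False by simp
    qed
    have "t = - hh d1 * hh d2 / ((1 + ?r) * hh d1 - ?r * hh d2)"
      using e2 D by (simp add: field_simps)
    then have "t \<in> Et" unfolding Et_def using that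
      by (intro image_eqI[where x="(d1,d2,i0,p1,p2)"]) auto
    with tE show False by simp
  qed
  define Bad1 where "Bad1 = (\<lambda>d. (1 - A d) / B d) ` L"
  define Bad2 where "Bad2 = (\<lambda>(o1, o2, i, i', i'', d). (o1 + (real i'' - real i) * (o2 - o1) / (real i' - real i) - A d) / B d)
      ` (S0 \<times> S0 \<times> {..k} \<times> {..k} \<times> {..k} \<times> L)"
  define Bad3 where "Bad3 = (\<lambda>(o1, d1, d2, i0, p1, p2). (o1 - A d1 - rho i0 p1 p2 * (A d1 - A d2)) / (B d1 + rho i0 p1 p2 * (B d1 - B d2)))
      ` (S0 \<times> L \<times> L \<times> {..k} \<times> {..k} \<times> {..k})"
  have smBad: "small (Bad1 \<union> Bad2 \<union> Bad3)"
  proof -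
    have fL: "small L" using finL by (rule small_finite)
    have fk: "small {..k}" by (rule small_finite) simp
    have "small Bad1" unfolding Bad1_def using fL by (rule small_image)
    moreover have "small Bad2" unfolding Bad2_def
      by (intro small_image small_Times sm fk fL)
    moreover have "small Bad3" unfolding Bad3_def
      by (intro small_image small_Times sm fk fL)
    ultimately show ?thesis by (intro small_Un)
  qed
  obtain x1 where x1: "x1 \<notin> Bad1 \<union> Bad2 \<union> Bad3"
  proof -
    have "Bad1 \<union> Bad2 \<union> Bad3 \<noteq> UNIV"
    proof
      assume "Bad1 \<union> Bad2 \<union> Bad3 = UNIV"
      then show False using smBad not_small_UNIV by simp
    qed
    then show ?thesis using that by blast
  qed
  define x where "x = (vector [x1, t] :: real^2)"
  have x2: "x$2 > 0" using t0 by (simp add: x_def)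
  have crx': "cr x d = A d + B d * x1" if "d \<in> L" for d unfolding x_def using crx[OF that] .
  define V where "V = (\<lambda>d. cr x d) ` L"
  have cardV: "card V \<le> k" unfolding V_def using cardL card_image_le[OF finL] le_trans by blast
  have finV: "finite V" unfolding V_def using finL by simp
  have one': "1 \<notin> V"
  proof
    assume "1 \<in> V"
    then obtain d where d: "d \<in> L" "1 = A d + B d * x1" unfolding V_def using crx' by auto
    then have "x1 = (1 - A d) / B d" using Bpos[OF d(1)] by (simp add: field_simps)
    then have "x1 \<in> Bad1" unfolding Bad1_def using d(1) by blast
    with x1 show False by blast
  qed
  have apV: "apfree k (S0 \<union> V)"
    unfolding apfree_def
  proof (intro allI impI notI)
    fix m l :: real
    assume l0: "0 < l" and l1: "l < 1" and all: "\<forall>i\<le>k. m + real i * l \<in> S0 \<union> V"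
    define g where "g i = m + real i * l" for i :: nat
    define Ob where "Ob = {i \<in> {..k}. g i \<in> S0}"
    have ginj: "inj_on g {..k}" unfolding g_def inj_on_def using l0 by auto
    show False
    proof (cases "\<exists>i\<in>Ob. \<exists>i'\<in>Ob. i \<noteq> i'")
      case True
      then obtain i i' where ii: "i \<in> Ob" "i' \<in> Ob" "i \<noteq> i'" by blast
      have "\<not> (\<forall>i\<le>k. g i \<in> S0)" using ap l0 l1 unfolding apfree_def g_def by blast
      then obtain i'' where i'': "i'' \<le> k" "g i'' \<notin> S0" by blast
      then have "g i'' \<in> V" using all unfolding g_def by blast
      then obtain d where d: "d \<in> L" "g i'' = A d + B d * x1" unfolding V_def using crx' by auto
      have gi: "g i'' = g i + (real i'' - real i) * (g i' - g i) / (real i' - real i)"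
        using ii(3) unfolding g_def by (simp add: field_simps)
      have "x1 = (g i + (real i'' - real i) * (g i' - g i) / (real i' - real i) - A d) / B d"
        using d Bpos[OF d(1)] gi by (simp add: field_simps)
      moreover have "(g i, g i', i, i', i'', d) \<in> S0 \<times> S0 \<times> {..k} \<times> {..k} \<times> {..k} \<times> L"
        using ii i'' d Ob_def by auto
      ultimately have "x1 \<in> Bad2" unfolding Bad2_def
        by (intro image_eqI[where x="(g i, g i', i, i', i'', d)"]) simp_all
      with x1 show False by blast
    next
      case False
      define N where "N = {..k} - Ob"
      have gN: "g ` N \<subseteq> V" using all unfolding N_def Ob_def g_def by auto
      have cN: "card (g ` N) = card N" using ginj unfolding N_def by (intro card_image) (auto intro: inj_on_subset)
      have "card (g ` N) \<le> card V" using gN finV by (rule card_mono[rotated])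
      then have cNk: "card N \<le> k" using cN cardV by simp
      have OsubK: "Ob \<subseteq> {..k}" unfolding Ob_def by auto
      have finO: "finite Ob" using OsubK finite_subset by blast
      have cNO: "card N = Suc k - card Ob" unfolding N_def using card_Diff_subset[OF finO OsubK] by simp
      have "Ob \<noteq> {}"
      proof
        assume "Ob = {}"
        then have "card N = Suc k" using cNO by simp
        with cNk show False by simp
      qed
      then obtain i0 where i0: "i0 \<in> Ob" by blast
      have Oeq: "Ob = {i0}" using False i0 by blast
      have cardN: "card N = k" using cNO Oeq by simp
      have "2 \<le> card N" using cardN k by simp
      have finN: "finite N" unfolding N_def by simp
      have "\<not> card N \<le> Suc 0" using \<open>2 \<le> card N\<close> by simp
      then obtain p1 p2 where pp: "p1 \<in> N" "p2 \<in> N" "p1 \<noteq> p2"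
        using card_le_Suc0_iff_eq[OF finN] by blast
      have p1k: "p1 \<le> k" and p2k: "p2 \<le> k" using pp unfolding N_def by auto
      have i0k: "i0 \<le> k" and gi0: "g i0 \<in> S0" using i0 unfolding Ob_def by auto
      obtain d1 where d1: "d1 \<in> L" "g p1 = A d1 + B d1 * x1" using gN pp(1) unfolding V_def using crx' by fastforce
      obtain d2 where d2: "d2 \<in> L" "g p2 = A d2 + B d2 * x1" using gN pp(2) unfolding V_def using crx' by fastforce
      let ?r = "rho i0 p1 p2"
      have rel: "g i0 = g p1 + ?r * (g p1 - g p2)"
        using pp(3) unfolding g_def rho_def by (simp add: field_simps)
      have sl: "B d1 + ?r * (B d1 - B d2) \<noteq> 0" using slope d1(1) d2(1) i0k p1k p2k pp(3) by blast
      have "x1 * (B d1 + ?r * (B d1 - B d2)) = g i0 - A d1 - ?r * (A d1 - A d2)"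
        using rel d1(2) d2(2) by (simp add: algebra_simps)
      then have "x1 = (g i0 - A d1 - ?r * (A d1 - A d2)) / (B d1 + ?r * (B d1 - B d2))"
        using sl by (simp add: field_simps)
      moreover have "(g i0, d1, d2, i0, p1, p2) \<in> S0 \<times> L \<times> L \<times> {..k} \<times> {..k} \<times> {..k}"
        using gi0 d1 d2 i0k p1k p2k by auto
      ultimately have "x1 \<in> Bad3" unfolding Bad3_def
        by (intro image_eqI[where x="(g i0, d1, d2, i0, p1, p2)"]) simp_all
      with x1 show False by blast
    qed
  qed
  show ?thesis using x2 apV one' unfolding V_def by blast
qed

lemma card_len_le:
  assumes inf: "infinite (UNIV :: 'a set)"
  shows "|{xs :: 'a list. length xs = n}| \<le>o |UNIV :: 'a set|"
proof (induction n)
  case 0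
  have "{xs :: 'a list. length xs = 0} = {[]}" by auto
  then have "|{xs :: 'a list. length xs = 0}| <o |UNIV :: 'a set|" using inf
    by (intro finite_ordLess_infinite) (auto simp: card_of_Well_order card_of_well_order_on Field_card_of)
  then show ?case by (rule ordLess_imp_ordLeq)
next
  case (Suc n)
  have "inj_on (\<lambda>xs. (hd xs, tl xs)) {xs :: 'a list. length xs = Suc n}"
    by (auto simp: inj_on_def intro: list.expand)
  moreover have "(\<lambda>xs. (hd xs, tl xs)) ` {xs :: 'a list. length xs = Suc n} \<subseteq> (UNIV :: 'a set) \<times> {xs. length xs = n}"
    by auto
  ultimately have "|{xs :: 'a list. length xs = Suc n}| \<le>o |(UNIV :: 'a set) \<times> {xs :: 'a list. length xs = n}|"
    using card_of_ordLeq by blast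
  also have "|(UNIV :: 'a set) \<times> {xs :: 'a list. length xs = n}| \<le>o |(UNIV :: 'a set) \<times> (UNIV :: 'a set)|"
    using Suc.IH card_of_Times_mono2 by blast
  also have "|(UNIV :: 'a set) \<times> (UNIV :: 'a set)| =o |UNIV :: 'a set|"
    using inf card_of_Times_same_infinite by blast
  finally show ?case .
qed

lemma card_lists_le:
  assumes inf: "infinite (UNIV :: 'a set)"
  shows "|UNIV :: 'a list set| \<le>o |UNIV :: 'a set|"
proof -
  have eq: "(UNIV :: 'a list set) = (\<Union>n \<in> (UNIV :: nat set). {xs. length xs = n})" by auto
  have LI: "|UNIV :: nat set| \<le>o |UNIV :: 'a set|" using inf infinite_iff_card_of_nat by blast
  have L: "\<forall>n\<in>(UNIV::nat set). |{xs :: 'a list. length xs = n}| \<le>o |UNIV :: 'a set|"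
    using card_len_le[OF inf] by blast
  have "|\<Union>n \<in> (UNIV :: nat set). {xs :: 'a list. length xs = n}| \<le>o |UNIV :: 'a set|"
    by (rule card_of_UNION_ordLeq_infinite[OF inf LI L])
  then show ?thesis unfolding eq .
qed

lemma infinite_UNIV_R2: "infinite (UNIV :: (real^2) set)"
proof
  assume "finite (UNIV :: (real^2) set)"
  then have fin: "finite ((\<lambda>x::real^2. x$1) ` UNIV)" by (rule finite_imageI)
  have "(UNIV :: real set) \<subseteq> (\<lambda>x::real^2. x$1) ` UNIV"
  proof
    fix t :: real
    have "t = (vector [t, 0] :: real^2)$1" by simp
    then show "t \<in> (\<lambda>x::real^2. x$1) ` UNIV" by blast
  qed
  then have "finite (UNIV :: real set)" using fin finite_subset by blast
  then show False using infinite_UNIV_char_0 by blast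
qed

lemma card_R2_le: "|UNIV :: (real^2) set| \<le>o |UNIV :: real set|"
proof -
  have "inj (\<lambda>x::real^2. (x$1, x$2))"
    by (auto simp: inj_def vec_eq_iff forall_2)
  then have "|UNIV :: (real^2) set| \<le>o |(UNIV :: real set) \<times> (UNIV :: real set)|"
    using card_of_ordLeq[of "UNIV :: (real^2) set" "(UNIV :: real set) \<times> (UNIV :: real set)"] by blast
  also have "|(UNIV :: real set) \<times> (UNIV :: real set)| =o |UNIV :: real set|"
    using infinite_UNIV_char_0 card_of_Times_same_infinite by blast
  finally show ?thesis .
qed

lemma card_tasks_le: "|UNIV :: (real^2) list set| \<le>o |UNIV :: real set|"
  using card_lists_le[OF infinite_UNIV_R2] card_R2_le ordLeq_transitive by blast


definition RR :: "((real^2) list \<times> (real^2) list) set" where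
  "RR = |UNIV :: (real^2) list set|"

lemma RR_wo: "well_order_on UNIV RR"
  unfolding RR_def by (rule card_of_well_order_on)

lemma RR_wf: "wf (RR - Id)"
  using RR_wo unfolding well_order_on_def by blast

lemma RR_refl: "(a, a) \<in> RR"
  using RR_wo unfolding well_order_on_def linear_order_on_def partial_order_on_def preorder_on_def refl_on_def
  by blast

lemma RR_trans: "(a, b) \<in> RR \<Longrightarrow> (b, c) \<in> RR \<Longrightarrow> (a, c) \<in> RR"
  using RR_wo unfolding well_order_on_def linear_order_on_def partial_order_on_def preorder_on_def trans_def
  by blast

lemma RR_total: "a \<noteq> b \<Longrightarrow> (a, b) \<in> RR \<or> (b, a) \<in> RR"
  using RR_wo unfolding well_order_on_def linear_order_on_def total_on_def by blast

lemma RR_max: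
  assumes "finite W" "W \<noteq> {}"
  shows "\<exists>b\<in>W. \<forall>b'\<in>W. (b', b) \<in> RR"
  using assms
proof (induction W rule: finite_ne_induct)
  case (singleton x)
  then show ?case using RR_refl by auto
next
  case (insert x F)
  then obtain b where b: "b \<in> F" "\<forall>b'\<in>F. (b', b) \<in> RR" by blast
  show ?case
  proof (cases "(x, b) \<in> RR")
    case True
    then show ?thesis using b by auto
  next
    case False
    then have "(b, x) \<in> RR" using RR_total RR_refl by metis
    then show ?thesis using b RR_trans RR_refl by blast
  qed
qed

lemma underS_RR_small: "small (underS RR a)"
proof -
  have "|underS RR a| <o RR"
    unfolding RR_def by (rule card_of_underS) (simp_all add: card_of_Card_order card_of_card_order_on Field_card_of)
  moreover have "RR \<le>o |UNIV :: real set|" unfolding RR_def by (rule card_tasks_le)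
  ultimately show ?thesis unfolding small_def using ordLess_ordLeq_trans by blast
qed

definition valid :: "nat \<Rightarrow> (real^2) list \<Rightarrow> bool" where
  "valid k xs \<longleftrightarrow> length xs \<le> k \<and> (\<forall>d \<in> set xs. d$2 < 0)"

definition vals :: "nat \<Rightarrow> (real^2) list \<Rightarrow> real^2 \<Rightarrow> real set" where
  "vals k xs x = (if valid k xs then (\<lambda>d. cr x d) ` set xs else {})"

definition prev :: "nat \<Rightarrow> ((real^2) list \<Rightarrow> real^2) \<Rightarrow> (real^2) list \<Rightarrow> real set" where
  "prev k f a = {0, 2} \<union> (\<Union>b \<in> underS RR a. vals k b (f b))"

definition good :: "nat \<Rightarrow> real set \<Rightarrow> (real^2) list \<Rightarrow> real^2 \<Rightarrow> bool" where
  "good k S0 xs x \<longleftrightarrow> x$2 > 0 \<and> apfree k (S0 \<union> vals k xs x) \<and> 1 \<notin> vals k xs x"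

definition Fstep :: "nat \<Rightarrow> ((real^2) list \<Rightarrow> real^2) \<Rightarrow> (real^2) list \<Rightarrow> real^2" where
  "Fstep k f a = (SOME x. good k (prev k f a) a x)"

definition fch :: "nat \<Rightarrow> (real^2) list \<Rightarrow> real^2" where
  "fch k = wfrec (RR - Id) (Fstep k)"

lemma finite_vals: "finite (vals k xs x)"
  unfolding vals_def by auto

lemma prev_cut: "prev k (cut f (RR - Id) a) a = prev k f a"
proof -
  have "\<And>b. b \<in> underS RR a \<Longrightarrow> cut f (RR - Id) a b = f b"
    by (rule cut_apply) (auto simp: underS_def)
  then show ?thesis unfolding prev_def by auto
qed

lemma fch_eq: "fch k a = Fstep k (fch k) a"
proof -
  have "fch k a = Fstep k (cut (fch k) (RR - Id) a) a"
    unfolding fch_def by (rule wfrec[OF RR_wf])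
  also have "\<dots> = Fstep k (fch k) a" unfolding Fstep_def prev_cut ..
  finally show ?thesis .
qed

lemma prev_small: "small (prev k f a)"
  unfolding prev_def
  by (intro small_Un small_finite small_UNION underS_RR_small finite_vals) auto

lemma apfree_big:
  assumes k: "2 \<le> k" and gd: "\<forall>b\<in>I. good k (prev k f b) b (f b)"
  shows "apfree k ({0, 2} \<union> (\<Union>b\<in>I. vals k b (f b)))"
  unfolding apfree_def
proof (intro allI impI notI)
  fix m l :: real
  assume l0: "0 < l" and l1: "l < 1" and all: "\<forall>i\<le>k. m + real i * l \<in> {0, 2} \<union> (\<Union>b\<in>I. vals k b (f b))"
  define J where "J = {i. i \<le> k \<and> m + real i * l \<notin> {0, 2}}"
  have "\<forall>i\<in>J. \<exists>b\<in>I. m + real i * l \<in> vals k b (f b)" using all unfolding J_def by blast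
  then obtain w where w: "\<And>i. i \<in> J \<Longrightarrow> w i \<in> I \<and> m + real i * l \<in> vals k (w i) (f (w i))" by metis
  show False
  proof (cases "J = {}")
    case True
    then have allin: "\<forall>i\<le>k. m + real i * l \<in> {0, 2}" unfolding J_def by auto
    have a0: "m \<in> {0, 2}" using allin[rule_format, of 0] by simp
    have a1: "m + l \<in> {0, 2}" using allin[rule_format, of 1] k by simp
    have a2: "m + 2 * l \<in> {0, 2}" using allin[rule_format, of 2] k by simp
    show False using a0 a1 a2 l0 by auto
  next
    case False
    have finJ: "finite J" unfolding J_def by simp
    obtain bs where bs: "bs \<in> w ` J" "\<forall>b'\<in>w ` J. (b', bs) \<in> RR"
      using RR_max[of "w ` J"] finJ False by auto
    have bsI: "bs \<in> I" using bs(1) w by auto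
    have "\<forall>i\<le>k. m + real i * l \<in> prev k f bs \<union> vals k bs (f bs)"
    proof (intro allI impI)
      fix i assume ik: "i \<le> k"
      show "m + real i * l \<in> prev k f bs \<union> vals k bs (f bs)"
      proof (cases "i \<in> J")
        case False
        then show ?thesis using ik unfolding J_def prev_def by auto
      next
        case True
        have wi: "w i \<in> I" "m + real i * l \<in> vals k (w i) (f (w i))" using w[OF True] by auto
        show ?thesis
        proof (cases "w i = bs")
          case True
          then show ?thesis using wi by auto
        next
          case False
          have "(w i, bs) \<in> RR" using bs(2) \<open>i \<in> J\<close> by blast
          then have "w i \<in> underS RR bs" using False by (simp add: underS_def)
          then show ?thesis using wi unfolding prev_def by blast
        qed
      qed
    qed
    moreover have "apfree k (prev k f bs \<union> vals k bs (f bs))" using gd bsI unfolding good_def by blast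
    ultimately show False using l0 l1 unfolding apfree_def by blast
  qed
qed

lemma one_notin_big:
  assumes gd: "\<forall>b\<in>I. good k (prev k f b) b (f b)"
  shows "1 \<notin> {0, 2} \<union> (\<Union>b\<in>I. vals k b (f b))"
  using gd unfolding good_def by auto

lemma fch_good:
  assumes k: "2 \<le> k"
  shows "good k (prev k (fch k) a) a (fch k a)"
  using RR_wf
proof (induction a rule: wf_induct_rule)
  case (less a)
  have gd: "\<forall>b\<in>underS RR a. good k (prev k (fch k) b) b (fch k b)"
    using less by (auto simp: underS_def)
  have ap: "apfree k (prev k (fch k) a)"
    unfolding prev_def using apfree_big[OF k gd] .
  have one: "1 \<notin> prev k (fch k) a"
    unfolding prev_def using one_notin_big[OF gd] .
  have sm: "small (prev k (fch k) a)" by (rule prev_small)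
  have ex: "\<exists>x. good k (prev k (fch k) a) a x"
  proof (cases "valid k a")
    case True
    have fin: "finite (set a)" by simp
    have card: "card (set a) \<le> k" using True card_length le_trans unfolding valid_def by blast
    have low: "\<forall>d\<in>set a. d$2 < 0" using True unfolding valid_def by blast
    obtain x where x: "x$2 > 0" "apfree k (prev k (fch k) a \<union> (\<lambda>d. cr x d) ` set a)"
      "1 \<notin> (\<lambda>d. cr x d) ` set a"
      using ext_step[OF k sm ap one fin card low] by blast
    then have "good k (prev k (fch k) a) a x" unfolding good_def vals_def using True by simp
    then show ?thesis by blast
  next
    case False
    have "good k (prev k (fch k) a) a (vector [0, 1])"
      unfolding good_def vals_def using False ap by simp
    then show ?thesis by blast
  qed
  have "fch k a = (SOME x. good k (prev k (fch k) a) a x)"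
    using fch_eq[of k a] unfolding Fstep_def .
  then show ?case using someI_ex[OF ex] by simp
qed

definition SS :: "nat \<Rightarrow> real set" where
  "SS k = {0, 2} \<union> (\<Union>b. vals k b (fch k b))"

lemma SS_props:
  assumes k: "2 \<le> k"
  shows "0 \<in> SS k" "2 \<in> SS k" "1 \<notin> SS k" "apfree k (SS k)"
    "\<And>L. finite L \<Longrightarrow> card L \<le> k \<Longrightarrow> \<forall>d\<in>L. d$2 < 0 \<Longrightarrow> \<exists>x::real^2. x$2 > 0 \<and> (\<forall>d\<in>L. cr x d \<in> SS k)"
proof -
  have gd: "\<forall>b\<in>UNIV. good k (prev k (fch k) b) b (fch k b)" using fch_good[OF k] by blast
  show "0 \<in> SS k" "2 \<in> SS k" unfolding SS_def by auto
  show "1 \<notin> SS k" unfolding SS_def using one_notin_big[OF gd] by simp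
  show "apfree k (SS k)" unfolding SS_def using apfree_big[OF k gd] by simp
  fix L :: "(real^2) set"
  assume fin: "finite L" and card: "card L \<le> k" and low: "\<forall>d\<in>L. d$2 < 0"
  obtain xs where xs: "set xs = L" "distinct xs" using finite_distinct_list[OF fin] by blast
  have "length xs = card L" using xs distinct_card by metis
  then have v: "valid k xs" unfolding valid_def using card low xs by auto
  have g: "good k (prev k (fch k) xs) xs (fch k xs)" using fch_good[OF k] .
  have "\<forall>d\<in>L. cr (fch k xs) d \<in> SS k"
    unfolding SS_def vals_def using v xs by auto
  moreover have "(fch k xs)$2 > 0" using g unfolding good_def by blast
  ultimately show "\<exists>x::real^2. x$2 > 0 \<and> (\<forall>d\<in>L. cr x d \<in> SS k)" by blast
qed

definition TT :: "nat \<Rightarrow> (real^2) set" where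
  "TT k = {p. p$2 \<noteq> 0 \<or> p$1 \<in> SS k}"

lemma seg_same:
  assumes p: "p \<in> TT k" and q: "q \<in> TT k" and s: "p$2 * q$2 \<ge> 0" and nz: "\<not> (p$2 = 0 \<and> q$2 = 0)"
  shows "closed_segment p q \<subseteq> TT k"
proof
  fix z assume z: "z \<in> closed_segment p q"
  then obtain u where u: "0 \<le> u" "u \<le> 1" "z = (1 - u) *\<^sub>R p + u *\<^sub>R q"
    unfolding closed_segment_def by auto
  have z2: "z$2 = (1 - u) * p$2 + u * q$2" using u(3) by simp
  show "z \<in> TT k"
  proof (cases "z$2 = 0")
    case False
    then show ?thesis unfolding TT_def by simp
  next
    case True
    have t1: "(1 - u) * p$2 + u * q$2 = 0" using z2 True by simp
    have "(1 - u) * p$2 = 0 \<and> u * q$2 = 0"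
    proof (cases "p$2 > 0")
      case True
      have "q$2 \<ge> 0"
      proof (rule ccontr)
        assume "\<not> q$2 \<ge> 0"
        then have "p$2 * q$2 < 0" using True by (simp add: mult_pos_neg)
        with s show False by simp
      qed
      moreover have "(1 - u) * p$2 \<ge> 0" using u(2) True by simp
      moreover have "u * q$2 \<ge> 0" using u(1) calculation(1) by simp
      ultimately show ?thesis using t1 by linarith
    next
      case False
      show ?thesis
      proof (cases "p$2 = 0")
        case True
        then show ?thesis using t1 by simp
      next
        case False2: False
        have pn: "p$2 < 0" using False False2 by simp
        have "q$2 \<le> 0"
        proof (rule ccontr)
          assume "\<not> q$2 \<le> 0"
          then have "p$2 * q$2 < 0" using pn by (simp add: mult_neg_pos)
          with s show False by simp
        qed
        moreover have "(1 - u) * p$2 \<le> 0" using u(2) pn by (simp add: mult_nonneg_nonpos)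
        moreover have "u * q$2 \<le> 0" using u(1) calculation(1) by (simp add: mult_nonneg_nonpos)
        ultimately show ?thesis using t1 by linarith
      qed
    qed
    then have "(u = 1 \<or> p$2 = 0) \<and> (u = 0 \<or> q$2 = 0)" by auto
    then have "z = p \<or> z = q" using nz u(3) by auto
    then show ?thesis using p q by auto
  qed
qed

lemma seg_cross:
  assumes s: "p$2 * q$2 < 0"
  shows "closed_segment p q \<subseteq> TT k \<longleftrightarrow> cr p q \<in> SS k"
proof
  have d: "p$2 - q$2 \<noteq> 0" using s by auto
  define u0 where "u0 = p$2 / (p$2 - q$2)"
  have u0: "0 \<le> u0" "u0 \<le> 1"
  proof -
    have "p$2 > 0 \<and> q$2 < 0 \<or> p$2 < 0 \<and> q$2 > 0" using s by (simp add: mult_less_0_iff)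
    then show "0 \<le> u0" "u0 \<le> 1" unfolding u0_def by (auto simp: divide_simps)
  qed
  define z0 where "z0 = (1 - u0) *\<^sub>R p + u0 *\<^sub>R q"
  have z0in: "z0 \<in> closed_segment p q" unfolding z0_def closed_segment_def using u0 by auto
  have z02: "z0$2 = 0" unfolding z0_def u0_def using d by (simp add: field_simps)
  have omu: "1 - u0 = - q$2 / (p$2 - q$2)" unfolding u0_def using d by (simp add: field_simps)
  have "z0$1 = (1 - u0) * p$1 + u0 * q$1" unfolding z0_def by simp
  also have "\<dots> = (- q$2 / (p$2 - q$2)) * p$1 + (p$2 / (p$2 - q$2)) * q$1" using omu u0_def by simp
  also have "\<dots> = cr p q" unfolding cr_def by (simp add: add_divide_distrib diff_divide_distrib mult.commute)
  finally have z01: "z0$1 = cr p q" .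
  {
    assume "closed_segment p q \<subseteq> TT k"
    then have "z0 \<in> TT k" using z0in by blast
    then show "cr p q \<in> SS k" using z02 z01 unfolding TT_def by auto
  }
  {
    assume c: "cr p q \<in> SS k"
    show "closed_segment p q \<subseteq> TT k"
    proof
      fix z assume "z \<in> closed_segment p q"
      then obtain u where u: "0 \<le> u" "u \<le> 1" "z = (1 - u) *\<^sub>R p + u *\<^sub>R q"
        unfolding closed_segment_def by auto
      show "z \<in> TT k"
      proof (cases "z$2 = 0")
        case False
        then show ?thesis unfolding TT_def by simp
      next
        case True
        then have "(1 - u) * p$2 + u * q$2 = 0" using u(3) by simp
        then have "u = u0" unfolding u0_def using d by (simp add: field_simps)
        then have "z = z0" using u(3) z0_def by simp
        then show ?thesis using z01 c unfolding TT_def by simp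
      qed
    qed
  }
qed


definition refl2 :: "real^2 \<Rightarrow> real^2" where
  "refl2 p = vector [p$1, - (p$2)]"

lemma refl2_1 [simp]: "(refl2 p)$1 = p$1" and refl2_2 [simp]: "(refl2 p)$2 = - (p$2)"
  unfolding refl2_def by simp_all

lemma refl2_refl2 [simp]: "refl2 (refl2 p) = p"
  by (simp add: vec_eq_iff forall_2)

lemma cr_refl2: "cr (refl2 a) (refl2 b) = cr a b"
proof -
  have "cr (refl2 a) (refl2 b) = (a$1 * b$2 - b$1 * a$2) / (b$2 - a$2)"
    unfolding cr_def by (simp add: algebra_simps)
  also have "\<dots> = cr a b" unfolding cr_def
    by (metis (no_types, opaque_lifting) minus_diff_eq minus_divide_divide mult_minus_right uminus_add_conv_diff)
  finally show ?thesis .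
qed

lemma part1:
  assumes k: "2 \<le> k" and PT: "P \<subseteq> TT k" and finP: "finite P" and cP: "card P \<le> 2*k+3"
  shows "\<exists>x\<in>TT k. \<forall>p\<in>P. sees_through (TT k) x p"
proof -
  define A where "A = {p\<in>P. p$2 = 0}"
  define Lo where "Lo = {p\<in>P. p$2 < 0}"
  define Up where "Up = {p\<in>P. p$2 > 0}"
  have finA: "finite A" and finLo: "finite Lo" and finUp: "finite Up"
    unfolding A_def Lo_def Up_def using finP by auto
  have Peq: "P = A \<union> Lo \<union> Up" unfolding A_def Lo_def Up_def by auto
  have cardP: "card P = card A + card Lo + card Up"
  proof -
    have "card (A \<union> Lo \<union> Up) = card (A \<union> Lo) + card Up"
      by (rule card_Un_disjoint) (use finA finLo finUp in \<open>auto simp: A_def Lo_def Up_def\<close>)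
    also have "card (A \<union> Lo) = card A + card Lo"
      by (rule card_Un_disjoint) (use finA finLo in \<open>auto simp: A_def Lo_def\<close>)
    finally show ?thesis using Peq by simp
  qed
  have SP: "0 \<in> SS k" "2 \<in> SS k" "1 \<notin> SS k" "apfree k (SS k)"
    using SS_props[OF k] by blast+
  show ?thesis
  proof (cases "card A \<le> 1")
    case True
    obtain a where a: "a \<in> TT k" "a$2 = 0" "A \<subseteq> {a}"
    proof (cases "A = {}")
      case True
      have "(vector [0, 0] :: real^2) \<in> TT k" unfolding TT_def using SP by simp
      then show ?thesis using that True by simp
    next
      case False
      then have "card A = 1" using \<open>card A \<le> 1\<close> finA by (simp add: card_gt_0_iff le_antisym Suc_leI)
      then obtain a where "A = {a}" by (rule card_1_singletonE)
      then show ?thesis using that PT unfolding A_def by auto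
    qed
    have "\<forall>p\<in>P. sees_through (TT k) a p"
    proof
      fix p assume pP: "p \<in> P"
      have pT: "p \<in> TT k" using pP PT by blast
      show "sees_through (TT k) a p"
      proof (cases "p$2 = 0")
        case True
        then have "p = a" using a(3) pP unfolding A_def by auto
        then show ?thesis using a(1) unfolding sees_through_def by simp
      next
        case False
        have "closed_segment a p \<subseteq> TT k" using seg_same[OF a(1) pT] a(2) False by simp
        then show ?thesis using a(1) pT unfolding sees_through_def by simp
      qed
    qed
    then show ?thesis using a(1) by blast
  next
    case False
    then have "card Lo + card Up \<le> 2*k + 1" using cardP cP by simp
    then have "card Lo \<le> k \<or> card Up \<le> k" by linarith
    then show ?thesis
    proof
      assume cLo: "card Lo \<le> k"
      obtain x :: "real^2" where x: "x$2 > 0" "\<forall>d\<in>Lo. cr x d \<in> SS k"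
        using SS_props(5)[OF k finLo cLo] unfolding Lo_def by auto
      have xT: "x \<in> TT k" unfolding TT_def using x by simp
      have "\<forall>p\<in>P. sees_through (TT k) x p"
      proof
        fix p assume pP: "p \<in> P"
        have pT: "p \<in> TT k" using pP PT by blast
        have "closed_segment x p \<subseteq> TT k"
        proof (cases "p$2 < 0")
          case True
          then have "p \<in> Lo" using pP unfolding Lo_def by simp
          then have "cr x p \<in> SS k" using x by blast
          moreover have "x$2 * p$2 < 0" using x(1) True by (simp add: mult_pos_neg)
          ultimately show ?thesis using seg_cross by blast
        next
          case False
          then have "x$2 * p$2 \<ge> 0" using x(1) by simp
          then show ?thesis using seg_same[OF xT pT] x(1) by simp
        qed
        then show "sees_through (TT k) x p" using xT pT unfolding sees_through_def by simp
      qed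
      then show ?thesis using xT by blast
    next
      assume cUp: "card Up \<le> k"
      define L' where "L' = refl2 ` Up"
      have finL': "finite L'" unfolding L'_def using finUp by simp
      have cL': "card L' \<le> k" unfolding L'_def using card_image_le[OF finUp, of refl2] cUp by linarith
      have lowL': "\<forall>d\<in>L'. d$2 < 0" unfolding L'_def Up_def by auto
      obtain x' :: "real^2" where x': "x'$2 > 0" "\<forall>d\<in>L'. cr x' d \<in> SS k"
        using SS_props(5)[OF k finL' cL' lowL'] by auto
      define x where "x = refl2 x'"
      have x2: "x$2 < 0" unfolding x_def using x' by simp
      have xT: "x \<in> TT k" unfolding TT_def using x2 by simp
      have "\<forall>p\<in>P. sees_through (TT k) x p"
      proof
        fix p assume pP: "p \<in> P"
        have pT: "p \<in> TT k" using pP PT by blast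
        have "closed_segment x p \<subseteq> TT k"
        proof (cases "p$2 > 0")
          case True
          then have "p \<in> Up" using pP unfolding Up_def by simp
          then have "refl2 p \<in> L'" unfolding L'_def by blast
          then have "cr x' (refl2 p) \<in> SS k" using x' by blast
          moreover have "cr x p = cr x' (refl2 p)"
            unfolding x_def using cr_refl2[of x' "refl2 p"] by simp
          moreover have "x$2 * p$2 < 0" using x2 True by (simp add: mult_neg_pos)
          ultimately show ?thesis using seg_cross by metis
        next
          case False
          then have "x$2 * p$2 \<ge> 0" using x2 by (simp add: mult_nonpos_nonpos)
          then show ?thesis using seg_same[OF xT pT] x2 by simp
        qed
        then show "sees_through (TT k) x p" using xT pT unfolding sees_through_def by simp
      qed
      then show ?thesis using xT by blast
    qed
  qed
qed


lemma axis_between: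
  assumes x2: "x$2 = 0" and y2: "y$2 = 0" and c1: "x$1 \<le> c" and c2: "c \<le> y$1"
  shows "(vector [c, 0] :: real^2) \<in> closed_segment x y"
proof (cases "x$1 = y$1")
  case True
  then have "c = x$1" using c1 c2 by simp
  then have "(vector [c, 0] :: real^2) = x" using x2 by (simp add: vec_eq_iff forall_2)
  then show ?thesis by simp
next
  case False
  then have lt: "x$1 < y$1" using c1 c2 by simp
  define u where "u = (c - x$1) / (y$1 - x$1)"
  have u0: "0 \<le> u" "u \<le> 1" unfolding u_def using lt c1 c2 by (auto simp: divide_simps)
  have "(vector [c, 0] :: real^2) = (1 - u) *\<^sub>R x + u *\<^sub>R y"
  proof -
    have ne: "y$1 - x$1 \<noteq> 0" using lt by simp
    have "u * (y$1 - x$1) = c - x$1" unfolding u_def using ne by simp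
    then have "(1 - u) * x$1 + u * y$1 = c" by (simp add: algebra_simps)
    then show ?thesis using x2 y2 by (simp add: vec_eq_iff forall_2)
  qed
  then show ?thesis unfolding closed_segment_def using u0 by blast
qed

lemma part2:
  assumes k: "2 \<le> k"
  shows "\<exists>P. P \<subseteq> TT k \<and> finite P \<and> card P = 2*k+4 \<and> \<not> (\<exists>x\<in>TT k. \<forall>p\<in>P. sees_through (TT k) x p)"
proof -
  have SP: "0 \<in> SS k" "2 \<in> SS k" "1 \<notin> SS k" "apfree k (SS k)"
    using SS_props[OF k] by blast+
  define a0 where "a0 = (vector [0, 0] :: real^2)"
  define a2 where "a2 = (vector [2, 0] :: real^2)"
  define dn where "dn i = (vector [real i, -1] :: real^2)" for i :: nat
  define up where "up i = (vector [real i, 1] :: real^2)" for i :: nat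
  define P0 where "P0 = ({a0, a2} \<union> dn ` {..k}) \<union> up ` {..k}"
  have injdn: "inj_on dn {..k}"
  proof (rule inj_onI)
    fix i j assume "dn i = dn j"
    then have "(dn i)$1 = (dn j)$1" by simp
    then show "i = j" unfolding dn_def by simp
  qed
  have injup: "inj_on up {..k}"
  proof (rule inj_onI)
    fix i j assume "up i = up j"
    then have "(up i)$1 = (up j)$1" by simp
    then show "i = j" unfolding up_def by simp
  qed
  have a02: "a0 \<noteq> a2"
  proof
    assume "a0 = a2"
    then have "a0$1 = a2$1" by simp
    then show False unfolding a0_def a2_def by simp
  qed
  have dis1: "{a0, a2} \<inter> dn ` {..k} = {}"
    unfolding a0_def a2_def dn_def by (auto simp: vec_eq_iff forall_2)
  have dis2: "({a0, a2} \<union> dn ` {..k}) \<inter> up ` {..k} = {}"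
    unfolding a0_def a2_def dn_def up_def by (auto simp: vec_eq_iff forall_2)
  have cardP0: "card P0 = 2*k+4"
  proof -
    have "card P0 = card ({a0, a2} \<union> dn ` {..k}) + card (up ` {..k})"
      unfolding P0_def by (rule card_Un_disjoint) (use dis2 in auto)
    also have "card ({a0, a2} \<union> dn ` {..k}) = card {a0, a2} + card (dn ` {..k})"
      by (rule card_Un_disjoint) (use dis1 in auto)
    also have "card {a0, a2} = 2" using a02 by simp
    also have "card (dn ` {..k}) = Suc k" using card_image[OF injdn] by simp
    also have "card (up ` {..k}) = Suc k" using card_image[OF injup] by simp
    finally show ?thesis by simp
  qed
  have finP0: "finite P0" unfolding P0_def by simp
  have P0T: "P0 \<subseteq> TT k"
    unfolding P0_def TT_def a0_def a2_def dn_def up_def using SP by auto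
  have noview: "\<not> (\<exists>x\<in>TT k. \<forall>p\<in>P0. sees_through (TT k) x p)"
  proof
    assume "\<exists>x\<in>TT k. \<forall>p\<in>P0. sees_through (TT k) x p"
    then obtain x where xT: "x \<in> TT k" and sees: "\<forall>p\<in>P0. closed_segment x p \<subseteq> TT k"
      unfolding sees_through_def by blast
    show False
    proof (cases "x$2 > 0")
      case True
      define m where "m = x$1 / (x$2 + 1)"
      define l where "l = x$2 / (x$2 + 1)"
      have l0: "0 < l" "l < 1" unfolding l_def using True by (auto simp: divide_simps)
      have "\<forall>i\<le>k. m + real i * l \<in> SS k"
      proof (intro allI impI)
        fix i assume ik: "i \<le> k"
        have "dn i \<in> P0" unfolding P0_def using ik by blast
        then have seg: "closed_segment x (dn i) \<subseteq> TT k" using sees by blast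
        have "x$2 * (dn i)$2 < 0" unfolding dn_def using True by simp
        then have "cr x (dn i) \<in> SS k" using seg seg_cross by blast
        moreover have "cr x (dn i) = m + real i * l"
        proof -
          have ne: "x$2 + 1 \<noteq> 0" using True by simp
          show ?thesis unfolding cr_def dn_def m_def l_def using ne by (simp add: add_divide_distrib)
        qed
        ultimately show "m + real i * l \<in> SS k" by simp
      qed
      then show False using SP(4) l0 unfolding apfree_def by blast
    next
      case False
      show False
      proof (cases "x$2 < 0")
        case True
        define m where "m = x$1 / (1 - x$2)"
        define l where "l = - x$2 / (1 - x$2)"
        have l0: "0 < l" "l < 1" unfolding l_def using True by (auto simp: divide_simps)
        have "\<forall>i\<le>k. m + real i * l \<in> SS k"
        proof (intro allI impI)
          fix i assume ik: "i \<le> k"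
          have "up i \<in> P0" unfolding P0_def using ik by blast
          then have seg: "closed_segment x (up i) \<subseteq> TT k" using sees by blast
          have "x$2 * (up i)$2 < 0" unfolding up_def using True by simp
          then have "cr x (up i) \<in> SS k" using seg seg_cross by blast
          moreover have "cr x (up i) = m + real i * l"
          proof -
            have ne: "x$2 - 1 \<noteq> 0" "1 - x$2 \<noteq> 0" using True by simp_all
            have "cr x (up i) = (- x$1 + real i * x$2) / (x$2 - 1)" unfolding cr_def up_def by simp
            also have "\<dots> = (x$1 - real i * x$2) / (1 - x$2)"
              using ne by (simp add: frac_eq_eq algebra_simps)
            also have "\<dots> = m + real i * l" unfolding m_def l_def by (simp add: diff_divide_distrib)
            finally show ?thesis .
          qed
          ultimately show "m + real i * l \<in> SS k" by simp
        qed
        then show False using SP(4) l0 unfolding apfree_def by blast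
      next
        case False2: False
        have x20: "x$2 = 0" using False False2 by simp
        have x1S: "x$1 \<in> SS k" using xT x20 unfolding TT_def by simp
        have one: "(vector [1, 0] :: real^2) \<notin> TT k" unfolding TT_def using SP(3) by simp
        have "x$1 \<noteq> 1" using x1S SP(3) by auto
        then show False
        proof (cases "x$1 < 1")
          case True
          have "(vector [1, 0] :: real^2) \<in> closed_segment x a2"
            by (rule axis_between) (use x20 True in \<open>simp_all add: a2_def\<close>)
          moreover have "a2 \<in> P0" unfolding P0_def by blast
          ultimately show False using sees one by blast
        next
          case False
          then have gt: "x$1 > 1" using \<open>x$1 \<noteq> 1\<close> by simp
          have "(vector [1, 0] :: real^2) \<in> closed_segment a0 x"
            by (rule axis_between) (use x20 gt in \<open>simp_all add: a0_def\<close>)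
          then have "(vector [1, 0] :: real^2) \<in> closed_segment x a0" by (simp add: closed_segment_commute)
          moreover have "a0 \<in> P0" unfolding P0_def by blast
          ultimately show False using sees one by blast
        qed
      qed
    qed
  qed
  show ?thesis using P0T finP0 cardP0 noview by blast
qed

theorem theorem1p4:
  fixes k :: nat
  assumes "k \<ge> 2"
  shows "\<exists>T :: (real^2) set.
     (\<forall>P. P \<subseteq> T \<and> finite P \<and> card P \<le> 2*k+3 \<longrightarrow>
          (\<exists>x\<in>T. \<forall>p\<in>P. sees_through T x p)) \<and>
     (\<exists>P. P \<subseteq> T \<and> finite P \<and> card P = 2*k+4 \<and>
          \<not> (\<exists>x\<in>T. \<forall>p\<in>P. sees_through T x p))"
proof -
  have A: "\<forall>P. P \<subseteq> TT k \<and> finite P \<and> card P \<le> 2*k+3 \<longrightarrow> (\<exists>x\<in>TT k. \<forall>p\<in>P. sees_through (TT k) x p)"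
    using part1[OF assms] by blast
  have B: "\<exists>P. P \<subseteq> TT k \<and> finite P \<and> card P = 2*k+4 \<and> \<not> (\<exists>x\<in>TT k. \<forall>p\<in>P. sees_through (TT k) x p)"
    using part2[OF assms] .
  show ?thesis using A B by blast
qed

end
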